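(* Let $G$ be an innately transitive permutation group on a finite set $\Omega$ with plinth $M$, let $\omega\in\Omega$ and $\mathcal E\in\mathrm{CD}(G)$. Then $M_{(\mathcal E)}=M$, the Cartesian system $\mathcal K_\omega(\mathcal E)$ is invariant under conjugation by $G_\omega$, and the actions of $G_\omega$ on $\mathcal K_\omega(\mathcal E)$ (by conjugation) and on $\mathcal E$ are permutationally equivalent.
   Context: A permutation group is innately transitive if it has a transitive minimal normal subgroup, called a plinth. A Cartesian decomposition of $\Omega$ is a set $\mathcal E=\{\Gamma_1,\dots,\Gamma_\ell\}$, $\ell\ge 2$, of partitions of $\Omega$ with $|\gamma_1\cap\cdots\cap\gamma_\ell|=1$ for all $\gamma_i\in\Gamma_i$; $\mathrm{CD}(G)$ is the set of $G$-invariant ones; $M_{(\mathcal E)}$ is the subgroup of $M$ fixing each partition in $\mathcal E$. If $M_{(\mathcal E)}=M$ and $\omega\in\Omega$, then $\mathcal K_\omega(\mathcal E)=\{M_{\gamma_1},\dots,M_{\gamma_\ell}\}$ where $\gamma_i$ is the block of $\Gamma_i$ containing $\omega$ and $M_{\gamma_i}$ is its setwise stabiliser; this is a Cartesian system of $M$ with respect to $\omega$, meaning $\bigcap_i K_i=M_\omega$ and $K_i(\bigcap_{j\ne i}K_j)=M$ for all $i$. *)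

theory Defs
  imports "HOL-Algebra.Algebra" "HOL-Library.Disjoint_Sets"
begin

definition perm_group :: "'a set \<Rightarrow> ('a \<Rightarrow> 'a) set \<Rightarrow> bool" where
  "perm_group \<Omega> G \<longleftrightarrow> subgroup G (BijGroup \<Omega>)"

definition transitive_on :: "'a set \<Rightarrow> ('a \<Rightarrow> 'a) set \<Rightarrow> bool" where
  "transitive_on \<Omega> H \<longleftrightarrow> (\<forall>\<alpha>\<in>\<Omega>. \<forall>\<beta>\<in>\<Omega>. \<exists>h\<in>H. h \<alpha> = \<beta>)"

definition minimal_normal :: "'a set \<Rightarrow> ('a \<Rightarrow> 'a) set \<Rightarrow> ('a \<Rightarrow> 'a) set \<Rightarrow> bool" where
  "minimal_normal \<Omega> G M \<longleftrightarrow>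
     M \<lhd> (BijGroup \<Omega>)\<lparr>carrier := G\<rparr> \<and> M \<noteq> {\<one>\<^bsub>BijGroup \<Omega>\<^esub>} \<and>
     (\<forall>N. N \<lhd> (BijGroup \<Omega>)\<lparr>carrier := G\<rparr> \<and> N \<subseteq> M \<longrightarrow>
          N = {\<one>\<^bsub>BijGroup \<Omega>\<^esub>} \<or> N = M)"

definition innately_transitive_plinth :: "'a set \<Rightarrow> ('a \<Rightarrow> 'a) set \<Rightarrow> ('a \<Rightarrow> 'a) set \<Rightarrow> bool" where
  "innately_transitive_plinth \<Omega> G M \<longleftrightarrow>
     perm_group \<Omega> G \<and> minimal_normal \<Omega> G M \<and> transitive_on \<Omega> M"

definition part_img :: "('a \<Rightarrow> 'a) \<Rightarrow> 'a set set \<Rightarrow> 'a set set" where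
  "part_img g \<Gamma> = (\<lambda>\<gamma>. g ` \<gamma>) ` \<Gamma>"

definition cart_decomp :: "'a set \<Rightarrow> 'a set set set \<Rightarrow> bool" where
  "cart_decomp \<Omega> E \<longleftrightarrow> card E \<ge> 2 \<and> (\<forall>\<Gamma>\<in>E. partition_on \<Omega> \<Gamma>) \<and>
     (\<forall>f. (\<forall>\<Gamma>\<in>E. f \<Gamma> \<in> \<Gamma>) \<longrightarrow> card (\<Inter>\<Gamma>\<in>E. f \<Gamma>) = 1)"

definition CD :: "'a set \<Rightarrow> ('a \<Rightarrow> 'a) set \<Rightarrow> 'a set set set set" where
  "CD \<Omega> G = {E. cart_decomp \<Omega> E \<and> (\<forall>g\<in>G. part_img g ` E = E)}"

definition cd_kernel :: "('a \<Rightarrow> 'a) set \<Rightarrow> 'a set set set \<Rightarrow> ('a \<Rightarrow> 'a) set" where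
  "cd_kernel M E = {m\<in>M. \<forall>\<Gamma>\<in>E. part_img m \<Gamma> = \<Gamma>}"

definition point_stab :: "('a \<Rightarrow> 'a) set \<Rightarrow> 'a \<Rightarrow> ('a \<Rightarrow> 'a) set" where
  "point_stab H \<omega> = {h\<in>H. h \<omega> = \<omega>}"

definition set_stab :: "('a \<Rightarrow> 'a) set \<Rightarrow> 'a set \<Rightarrow> ('a \<Rightarrow> 'a) set" where
  "set_stab H \<gamma> = {h\<in>H. h ` \<gamma> = \<gamma>}"

definition block_of :: "'a set set \<Rightarrow> 'a \<Rightarrow> 'a set" where
  "block_of \<Gamma> \<omega> = (THE \<gamma>. \<gamma> \<in> \<Gamma> \<and> \<omega> \<in> \<gamma>)"

definition cart_system :: "('a \<Rightarrow> 'a) set \<Rightarrow> 'a \<Rightarrow> 'a set set set \<Rightarrow> ('a \<Rightarrow> 'a) set set" where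
  "cart_system M \<omega> E = (\<lambda>\<Gamma>. set_stab M (block_of \<Gamma> \<omega>)) ` E"

(* conjugation g K g^-1 inside BijGroup \<Omega> (left action, matching g acting on partitions) *)
definition conj_set :: "'a set \<Rightarrow> ('a \<Rightarrow> 'a) \<Rightarrow> ('a \<Rightarrow> 'a) set \<Rightarrow> ('a \<Rightarrow> 'a) set" where
  "conj_set \<Omega> g K = (\<lambda>k. g \<otimes>\<^bsub>BijGroup \<Omega>\<^esub> k \<otimes>\<^bsub>BijGroup \<Omega>\<^esub> inv\<^bsub>BijGroup \<Omega>\<^esub> g) ` K"

end

theory Submission
  imports Defs "HOL-Computational_Algebra.Primes" "HOL-Combinatorics.Permutations"
begin


lemma fact_split:
  fixes p k :: nat
  assumes p: "Factorial_Ring.prime p"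
  shows "\<exists>r. fact k = p ^ (k div p) * fact (k div p) * r \<and> \<not> p dvd r"
proof -
  have p1: "p > 1" using p prime_gt_1_nat by blast
  define A where "A = {j\<in>{1..k}. p dvd j}"
  define C where "C = {j\<in>{1..k}. \<not> p dvd j}"
  have un: "{1..k} = A \<union> C" and dis: "A \<inter> C = {}" unfolding A_def C_def by auto
  have Aim: "A = (\<lambda>i. p * i) ` {1..k div p}"
  proof
    show "A \<subseteq> (\<lambda>i. p * i) ` {1..k div p}"
    proof
      fix j assume "j \<in> A"
      then obtain i where i: "j = p * i" "1 \<le> j" "j \<le> k" unfolding A_def by auto
      have "i \<ge> 1" using i p1 by (cases i) auto
      moreover have "i \<le> k div p" using i p1
        by (metis div_le_mono nonzero_mult_div_cancel_left not_one_less_zero)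
      ultimately show "j \<in> (\<lambda>i. p * i) ` {1..k div p}" using i by auto
    qed
  next
    show "(\<lambda>i. p * i) ` {1..k div p} \<subseteq> A"
    proof
      fix j assume "j \<in> (\<lambda>i. p * i) ` {1..k div p}"
      then obtain i where i: "j = p * i" "1 \<le> i" "i \<le> k div p" by (elim imageE) fastforce
      have "p * i \<le> p * (k div p)" using i by simp
      also have "\<dots> \<le> k" by simp
      finally show "j \<in> A" unfolding A_def using i p1 by auto
    qed
  qed
  have injA: "inj_on (\<lambda>i. p * i) {1..k div p}" using p1 by (auto simp: inj_on_def)
  have "prod id A = (\<Prod>i\<in>{1..k div p}. p * i)"
    unfolding Aim using prod.reindex[OF injA, of id] by (simp add: comp_def)
  also have "\<dots> = p ^ (k div p) * fact (k div p)"
    by (simp add: prod.distrib fact_prod)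
  finally have PA: "prod id A = p ^ (k div p) * fact (k div p)" .
  have "fact k = prod id {1..k}" by (simp add: fact_prod)
  also have "\<dots> = prod id A * prod id C"
    unfolding un by (rule prod.union_disjoint) (auto simp: A_def C_def dis)
  finally have "fact k = p ^ (k div p) * fact (k div p) * prod id C" using PA by simp
  moreover have "\<not> p dvd prod id C"
  proof
    assume "p dvd prod id C"
    then obtain j where "j \<in> C" "p dvd j"
      using prime_dvd_prod_iff[OF _ p, of C id] unfolding C_def by auto
    then show False unfolding C_def by auto
  qed
  ultimately show ?thesis by blast
qed

lemma not_pow_dvd_fact:
  fixes p :: nat
  assumes p: "Factorial_Ring.prime p"
  shows "k \<ge> 1 \<Longrightarrow> \<not> p ^ k dvd fact k"
proof (induction k rule: less_induct)
  case (less k)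
  have p1: "p > 1" using p prime_gt_1_nat by blast
  obtain r where r: "fact k = p ^ (k div p) * fact (k div p) * r" "\<not> p dvd r"
    using fact_split[OF p] by blast
  define q where "q = k div p"
  have cop: "coprime (p ^ k) r" using r(2) p
    by (simp add: prime_imp_coprime)
  show ?case
  proof
    assume "p ^ k dvd fact k"
    then have d: "p ^ k dvd p ^ q * fact q" using r(1) cop q_def
      by (metis coprime_dvd_mult_left_iff)
    have qk: "q < k" unfolding q_def using less.prems p1 by simp
    have "2 * q \<le> k"
    proof -
      have "2 * q \<le> p * q" using p1 by simp
      also have "\<dots> \<le> k" unfolding q_def by simp
      finally show ?thesis .
    qed
    then have "p ^ k = p ^ q * p ^ (k - q)" by (simp add: power_add[symmetric])
    with d have "p ^ (k - q) dvd fact q" using p1 by simp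
    moreover have "p ^ q dvd p ^ (k - q)" using \<open>2 * q \<le> k\<close> by (simp add: le_imp_power_dvd)
    ultimately have "p ^ q dvd fact q" by (rule dvd_trans[rotated])
    show False
    proof (cases "q = 0")
      case True
      then have "p ^ k dvd 1" using d by simp
      then show False using p1 less.prems by simp
    next
      case False
      then show False using less.IH[OF qk] \<open>p ^ q dvd fact q\<close> by simp
    qed
  qed
qed

lemma Bij_mult: "f \<in> Bij S \<Longrightarrow> g \<in> Bij S \<Longrightarrow> f \<otimes>\<^bsub>BijGroup S\<^esub> g = compose S f g"
  by (simp add: BijGroup_def)

lemma Bij_mult_apply: "f \<in> Bij S \<Longrightarrow> g \<in> Bij S \<Longrightarrow> x \<in> S \<Longrightarrow> (f \<otimes>\<^bsub>BijGroup S\<^esub> g) x = f (g x)"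
  by (simp add: Bij_mult compose_def)

lemma Bij_one: "\<one>\<^bsub>BijGroup S\<^esub> = (\<lambda>x\<in>S. x)"
  by (simp add: BijGroup_def)

lemma Bij_carrier: "carrier (BijGroup S) = Bij S"
  by (simp add: BijGroup_def)

lemma Bij_mem: "f \<in> Bij S \<Longrightarrow> x \<in> S \<Longrightarrow> f x \<in> S"
  by (auto simp: Bij_def bij_betw_def)

lemma Bij_img_sub: "f \<in> Bij S \<Longrightarrow> A \<subseteq> S \<Longrightarrow> f ` A \<subseteq> S"
  by (auto simp: Bij_def bij_betw_def)

lemma Bij_img: "f \<in> Bij S \<Longrightarrow> f ` S = S"
  by (auto simp: Bij_def bij_betw_def)

lemma Bij_inj: "f \<in> Bij S \<Longrightarrow> inj_on f S"
  by (auto simp: Bij_def bij_betw_def)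

lemma Bij_inv_mem: "f \<in> Bij S \<Longrightarrow> inv\<^bsub>BijGroup S\<^esub> f \<in> Bij S"
  by (simp add: inv_BijGroup restrict_inv_into_Bij)

lemma Bij_inv_left: "f \<in> Bij S \<Longrightarrow> x \<in> S \<Longrightarrow> (inv\<^bsub>BijGroup S\<^esub> f) (f x) = x"
  by (simp add: inv_BijGroup Bij_mem Bij_inj inv_into_f_f)

lemma Bij_inv_right: "f \<in> Bij S \<Longrightarrow> x \<in> S \<Longrightarrow> f ((inv\<^bsub>BijGroup S\<^esub> f) x) = x"
  by (simp add: inv_BijGroup Bij_img f_inv_into_f)

lemma Bij_mult_img: "f \<in> Bij S \<Longrightarrow> g \<in> Bij S \<Longrightarrow> A \<subseteq> S \<Longrightarrow> (f \<otimes>\<^bsub>BijGroup S\<^esub> g) ` A = f ` g ` A"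
proof -
  assume a: "f \<in> Bij S" "g \<in> Bij S" "A \<subseteq> S"
  have "(f \<otimes>\<^bsub>BijGroup S\<^esub> g) ` A = (\<lambda>x. f (g x)) ` A"
  proof (rule image_cong[OF refl])
    fix x assume "x \<in> A"
    then have "x \<in> S" using a(3) by blast
    then show "(f \<otimes>\<^bsub>BijGroup S\<^esub> g) x = f (g x)" using Bij_mult_apply[OF a(1) a(2)] by simp
  qed
  then show ?thesis by (simp add: image_image)
qed

lemma part_img_mult: "f \<in> Bij S \<Longrightarrow> g \<in> Bij S \<Longrightarrow> \<forall>\<gamma>\<in>\<Gamma>. \<gamma> \<subseteq> S \<Longrightarrow>
   part_img (f \<otimes>\<^bsub>BijGroup S\<^esub> g) \<Gamma> = part_img f (part_img g \<Gamma>)"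
  unfolding part_img_def image_image by (rule image_cong[OF refl]) (simp add: Bij_mult_img image_image)

lemma part_img_one: "\<forall>\<gamma>\<in>\<Gamma>. \<gamma> \<subseteq> S \<Longrightarrow> part_img (\<one>\<^bsub>BijGroup S\<^esub>) \<Gamma> = \<Gamma>"
proof -
  assume a: "\<forall>\<gamma>\<in>\<Gamma>. \<gamma> \<subseteq> S"
  have "\<And>\<gamma>. \<gamma> \<in> \<Gamma> \<Longrightarrow> (\<lambda>x\<in>S. x) ` \<gamma> = \<gamma>" using a by auto
  then show ?thesis unfolding part_img_def Bij_one by simp
qed

lemma act_hom:
  fixes H :: "('g, 'b) monoid_scheme" and XX :: "'x set" and act :: "'g \<Rightarrow> 'x \<Rightarrow> 'x"
  assumes H: "group H"
    and cl: "\<And>m x. m \<in> carrier H \<Longrightarrow> x \<in> XX \<Longrightarrow> act m x \<in> XX"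
    and mu: "\<And>m n x. m \<in> carrier H \<Longrightarrow> n \<in> carrier H \<Longrightarrow> x \<in> XX \<Longrightarrow> act (m \<otimes>\<^bsub>H\<^esub> n) x = act m (act n x)"
    and on: "\<And>x. x \<in> XX \<Longrightarrow> act \<one>\<^bsub>H\<^esub> x = x"
  shows "group_hom H (BijGroup XX) (\<lambda>m. restrict (act m) XX)"
proof -
  have inB: "restrict (act m) XX \<in> Bij XX" if m: "m \<in> carrier H" for m
  proof -
    have im: "inv\<^bsub>H\<^esub> m \<in> carrier H" using H m by simp
    have "bij_betw (act m) XX XX"
    proof (rule bij_betw_byWitness[where f'="act (inv\<^bsub>H\<^esub> m)"])
      show "\<forall>a\<in>XX. act (inv\<^bsub>H\<^esub> m) (act m a) = a"
      proof
        fix a assume a: "a \<in> XX"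
        have "act (inv\<^bsub>H\<^esub> m) (act m a) = act (inv\<^bsub>H\<^esub> m \<otimes>\<^bsub>H\<^esub> m) a" using mu[OF im m a] by simp
        also have "\<dots> = act \<one>\<^bsub>H\<^esub> a" using H m by (simp add: group.l_inv)
        finally show "act (inv\<^bsub>H\<^esub> m) (act m a) = a" using on[OF a] by simp
      qed
      show "\<forall>a\<in>XX. act m (act (inv\<^bsub>H\<^esub> m) a) = a"
      proof
        fix a assume a: "a \<in> XX"
        have "act m (act (inv\<^bsub>H\<^esub> m) a) = act (m \<otimes>\<^bsub>H\<^esub> inv\<^bsub>H\<^esub> m) a" using mu[OF m im a] by simp
        also have "\<dots> = act \<one>\<^bsub>H\<^esub> a" using H m by (simp add: group.r_inv)
        finally show "act m (act (inv\<^bsub>H\<^esub> m) a) = a" using on[OF a] by simp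
      qed
      show "act m ` XX \<subseteq> XX" using cl m by auto
      show "act (inv\<^bsub>H\<^esub> m) ` XX \<subseteq> XX" using cl im by auto
    qed
    then show ?thesis unfolding Bij_def using restrict_extensional bij_betw_restrict_eq by blast
  qed
  show ?thesis
    unfolding group_hom_def group_hom_axioms_def
  proof (intro conjI)
    show "group H" by fact
    show "group (BijGroup XX)" by (rule group_BijGroup)
    show "(\<lambda>m. restrict (act m) XX) \<in> hom H (BijGroup XX)"
      unfolding hom_def
    proof (intro CollectI conjI ballI)
      show "(\<lambda>m. restrict (act m) XX) \<in> carrier H \<rightarrow> carrier (BijGroup XX)"
        using inB by (auto simp: Bij_carrier)
      fix m n assume m: "m \<in> carrier H" and n: "n \<in> carrier H"
      show "restrict (act (m \<otimes>\<^bsub>H\<^esub> n)) XX = restrict (act m) XX \<otimes>\<^bsub>BijGroup XX\<^esub> restrict (act n) XX"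
        unfolding Bij_mult[OF inB[OF m] inB[OF n]] compose_def
        by (rule ext) (simp add: mu[OF m n] cl[OF n])
    qed
  qed
qed


lemma card_Bij:
  assumes "finite S"
  shows "card (Bij S) = fact (card S)"
proof -
  have "bij_betw (\<lambda>f x. if x \<in> S then f x else x) (Bij S) {p. p permutes S}"
  proof (rule bij_betw_byWitness[where f'="\<lambda>p. restrict p S"])
    show "\<forall>f\<in>Bij S. restrict (\<lambda>x. if x \<in> S then f x else x) S = f"
    proof
      fix f assume f: "f \<in> Bij S"
      show "restrict (\<lambda>x. if x \<in> S then f x else x) S = f"
      proof
        fix x show "restrict (\<lambda>x. if x \<in> S then f x else x) S x = f x"
          using f by (cases "x \<in> S") (auto simp: Bij_def extensional_def)
      qed
    qed
    show "\<forall>p\<in>{p. p permutes S}. (\<lambda>x. if x \<in> S then restrict p S x else x) = p"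
    proof
      fix p assume p: "p \<in> {p. p permutes S}"
      show "(\<lambda>x. if x \<in> S then restrict p S x else x) = p"
      proof
        fix x show "(if x \<in> S then restrict p S x else x) = p x"
          using p by (cases "x \<in> S") (auto simp: permutes_not_in)
      qed
    qed
    show "(\<lambda>f x. if x \<in> S then f x else x) ` Bij S \<subseteq> {p. p permutes S}"
    proof
      fix q assume "q \<in> (\<lambda>f x. if x \<in> S then f x else x) ` Bij S"
      then obtain f where f: "f \<in> Bij S" and q: "q = (\<lambda>x. if x \<in> S then f x else x)" by blast
      have "bij_betw f S S" using f by (simp add: Bij_def)
      then have "bij_betw q S S" unfolding q by (rule bij_betw_cong[THEN iffD1, rotated]) simp
      then show "q \<in> {p. p permutes S}" by (auto intro!: bij_imp_permutes simp: q)
    qed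
    show "(\<lambda>p. restrict p S) ` {p. p permutes S} \<subseteq> Bij S"
    proof
      fix q assume "q \<in> (\<lambda>p. restrict p S) ` {p. p permutes S}"
      then obtain p where p: "p permutes S" and q: "q = restrict p S" by blast
      have "bij_betw p S S" using p by (rule permutes_imp_bij)
      then show "q \<in> Bij S" unfolding q Bij_def by simp
    qed
  qed
  then have "card (Bij S) = card {p. p permutes S}" by (rule bij_betw_same_card)
  also have "\<dots> = fact (card S)" using card_permutations[OF refl assms] .
  finally show ?thesis .
qed

locale ctx =
  fixes \<Omega> :: "'a set" and G M :: "('a \<Rightarrow> 'a) set" and \<omega> :: 'a and E :: "'a set set set"
  assumes fin: "finite \<Omega>" and itp: "innately_transitive_plinth \<Omega> G M"
    and om: "\<omega> \<in> \<Omega>" and EG: "E \<in> CD \<Omega> G"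
begin

abbreviation "BG \<equiv> BijGroup \<Omega>"

lemma grpB: "group BG" by (rule group_BijGroup)

lemma Gsub: "subgroup G BG"
  using itp by (simp add: innately_transitive_plinth_def perm_group_def)

lemma GBij: "g \<in> G \<Longrightarrow> g \<in> Bij \<Omega>"
  using subgroup.subset[OF Gsub] Bij_carrier by blast

lemma GB: "group (BG\<lparr>carrier := G\<rparr>)"
  by (rule subgroup.subgroup_is_group[OF Gsub grpB])

lemma Gmult: "g \<in> G \<Longrightarrow> h \<in> G \<Longrightarrow> g \<otimes>\<^bsub>BG\<^esub> h \<in> G"
  using subgroup.m_closed[OF Gsub] by blast

lemma Gone: "\<one>\<^bsub>BG\<^esub> \<in> G"
  using subgroup.one_closed[OF Gsub] by blast

lemma Ginv: "g \<in> G \<Longrightarrow> inv\<^bsub>BG\<^esub> g \<in> G"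
  using subgroup.m_inv_closed[OF Gsub] by blast

lemma Mnormal: "M \<lhd> BG\<lparr>carrier := G\<rparr>"
  using itp by (simp add: innately_transitive_plinth_def minimal_normal_def)

lemma Mmin: "N \<lhd> BG\<lparr>carrier := G\<rparr> \<Longrightarrow> N \<subseteq> M \<Longrightarrow> N = {\<one>\<^bsub>BG\<^esub>} \<or> N = M"
  using itp by (simp add: innately_transitive_plinth_def minimal_normal_def)

lemma Mtrans: "\<alpha> \<in> \<Omega> \<Longrightarrow> \<beta> \<in> \<Omega> \<Longrightarrow> \<exists>m\<in>M. m \<alpha> = \<beta>"
  using itp by (simp add: innately_transitive_plinth_def transitive_on_def)

lemma Msub: "subgroup M (BG\<lparr>carrier := G\<rparr>)"
  using Mnormal normal_imp_subgroup by blast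

lemma MG: "M \<subseteq> G"
  using subgroup.subset[OF Msub] by simp

lemma MBij: "m \<in> M \<Longrightarrow> m \<in> Bij \<Omega>"
  using MG GBij by blast

lemma Mmult: "m \<in> M \<Longrightarrow> n \<in> M \<Longrightarrow> m \<otimes>\<^bsub>BG\<^esub> n \<in> M"
  using subgroup.m_closed[OF Msub] by simp

lemma Mone: "\<one>\<^bsub>BG\<^esub> \<in> M"
  using subgroup.one_closed[OF Msub] by simp

lemma Minv: "m \<in> M \<Longrightarrow> inv\<^bsub>BG\<^esub> m \<in> M"
proof -
  assume m: "m \<in> M"
  have "inv\<^bsub>BG\<lparr>carrier := G\<rparr>\<^esub> m \<in> M" using subgroup.m_inv_closed[OF Msub m] .
  moreover have "inv\<^bsub>BG\<lparr>carrier := G\<rparr>\<^esub> m = inv\<^bsub>BG\<^esub> m"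
    using group.m_inv_consistent[OF grpB Gsub] m MG by blast
  ultimately show ?thesis by simp
qed

lemma Mconj: "g \<in> G \<Longrightarrow> m \<in> M \<Longrightarrow> g \<otimes>\<^bsub>BG\<^esub> m \<otimes>\<^bsub>BG\<^esub> inv\<^bsub>BG\<^esub> g \<in> M"
proof -
  assume g: "g \<in> G" and m: "m \<in> M"
  have "\<forall>x\<in>carrier (BG\<lparr>carrier := G\<rparr>). \<forall>h\<in>M. x \<otimes>\<^bsub>BG\<lparr>carrier := G\<rparr>\<^esub> h \<otimes>\<^bsub>BG\<lparr>carrier := G\<rparr>\<^esub> inv\<^bsub>BG\<lparr>carrier := G\<rparr>\<^esub> x \<in> M"
    using Mnormal group.normal_inv_iff[OF GB] by blast
  then have "g \<otimes>\<^bsub>BG\<^esub> m \<otimes>\<^bsub>BG\<^esub> inv\<^bsub>BG\<lparr>carrier := G\<rparr>\<^esub> g \<in> M" using g m by simp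
  moreover have "inv\<^bsub>BG\<lparr>carrier := G\<rparr>\<^esub> g = inv\<^bsub>BG\<^esub> g"
    using group.m_inv_consistent[OF grpB Gsub] g by blast
  ultimately show ?thesis by simp
qed

lemma normal_crit:
  assumes "N \<subseteq> G" "\<one>\<^bsub>BG\<^esub> \<in> N"
    and "\<And>x y. x \<in> N \<Longrightarrow> y \<in> N \<Longrightarrow> x \<otimes>\<^bsub>BG\<^esub> y \<in> N"
    and "\<And>x. x \<in> N \<Longrightarrow> inv\<^bsub>BG\<^esub> x \<in> N"
    and "\<And>g x. g \<in> G \<Longrightarrow> x \<in> N \<Longrightarrow> g \<otimes>\<^bsub>BG\<^esub> x \<otimes>\<^bsub>BG\<^esub> inv\<^bsub>BG\<^esub> g \<in> N"
  shows "N \<lhd> BG\<lparr>carrier := G\<rparr>"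
proof -
  have ic: "\<And>x. x \<in> G \<Longrightarrow> inv\<^bsub>BG\<lparr>carrier := G\<rparr>\<^esub> x = inv\<^bsub>BG\<^esub> x"
    using group.m_inv_consistent[OF grpB Gsub] by blast
  have "subgroup N (BG\<lparr>carrier := G\<rparr>)"
  proof
    show "N \<subseteq> carrier (BG\<lparr>carrier := G\<rparr>)" using assms(1) by simp
    show "\<And>x y. x \<in> N \<Longrightarrow> y \<in> N \<Longrightarrow> x \<otimes>\<^bsub>BG\<lparr>carrier := G\<rparr>\<^esub> y \<in> N" using assms(3) by simp
    show "\<one>\<^bsub>BG\<lparr>carrier := G\<rparr>\<^esub> \<in> N" using assms(2) by simp
    show "\<And>x. x \<in> N \<Longrightarrow> inv\<^bsub>BG\<lparr>carrier := G\<rparr>\<^esub> x \<in> N" using assms(1,4) ic by auto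
  qed
  moreover have "\<forall>x\<in>carrier (BG\<lparr>carrier := G\<rparr>). \<forall>h\<in>N. x \<otimes>\<^bsub>BG\<lparr>carrier := G\<rparr>\<^esub> h \<otimes>\<^bsub>BG\<lparr>carrier := G\<rparr>\<^esub> inv\<^bsub>BG\<lparr>carrier := G\<rparr>\<^esub> x \<in> N"
    using assms(5) ic by simp
  ultimately show ?thesis using group.normal_inv_iff[OF GB] by blast
qed

lemma Ecd: "cart_decomp \<Omega> E"
  using EG by (simp add: CD_def)

lemma Einv: "g \<in> G \<Longrightarrow> part_img g ` E = E"
  using EG by (simp add: CD_def)

lemma Epart: "\<Gamma> \<in> E \<Longrightarrow> partition_on \<Omega> \<Gamma>"
  using Ecd by (simp add: cart_decomp_def)

lemma Eun: "\<Gamma> \<in> E \<Longrightarrow> \<Union>\<Gamma> = \<Omega>"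
  using Epart by (simp add: partition_on_def)

lemma Esub: "\<Gamma> \<in> E \<Longrightarrow> \<gamma> \<in> \<Gamma> \<Longrightarrow> \<gamma> \<subseteq> \<Omega>"
  using Eun by blast

lemma Esub': "\<Gamma> \<in> E \<Longrightarrow> \<forall>\<gamma>\<in>\<Gamma>. \<gamma> \<subseteq> \<Omega>"
  using Esub by blast

lemma Edisj: "\<Gamma> \<in> E \<Longrightarrow> \<gamma> \<in> \<Gamma> \<Longrightarrow> \<delta> \<in> \<Gamma> \<Longrightarrow> x \<in> \<gamma> \<Longrightarrow> x \<in> \<delta> \<Longrightarrow> \<gamma> = \<delta>"
proof -
  assume a: "\<Gamma> \<in> E" "\<gamma> \<in> \<Gamma>" "\<delta> \<in> \<Gamma>" "x \<in> \<gamma>" "x \<in> \<delta>"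
  have "disjoint \<Gamma>" using Epart[OF a(1)] by (simp add: partition_on_def)
  then show ?thesis using a unfolding disjoint_def by blast
qed

lemma Ecov: "\<Gamma> \<in> E \<Longrightarrow> x \<in> \<Omega> \<Longrightarrow> \<exists>\<gamma>\<in>\<Gamma>. x \<in> \<gamma>"
  using Eun by blast

lemma Ecart: "\<forall>\<Gamma>\<in>E. f \<Gamma> \<in> \<Gamma> \<Longrightarrow> card (\<Inter>\<Gamma>\<in>E. f \<Gamma>) = 1"
  using Ecd by (simp add: cart_decomp_def)

lemma Ene: "E \<noteq> {}"
proof -
  have "card E \<ge> 2" using Ecd by (simp add: cart_decomp_def)
  then show ?thesis by auto
qed

lemma Efin: "finite E"
proof -
  have "E \<subseteq> Pow (Pow \<Omega>)" using Esub by blast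
  then show ?thesis using fin finite_subset by blast
qed

lemma Pfin: "\<Gamma> \<in> E \<Longrightarrow> finite \<Gamma>"
proof -
  assume "\<Gamma> \<in> E"
  then have "\<Gamma> \<subseteq> Pow \<Omega>" using Esub by blast
  then show ?thesis using fin finite_subset by blast
qed

lemma pimg_E: "g \<in> G \<Longrightarrow> \<Gamma> \<in> E \<Longrightarrow> part_img g \<Gamma> \<in> E"
  using Einv by blast

lemma blk: "\<Gamma> \<in> E \<Longrightarrow> x \<in> \<Omega> \<Longrightarrow> block_of \<Gamma> x \<in> \<Gamma> \<and> x \<in> block_of \<Gamma> x"
proof -
  assume G: "\<Gamma> \<in> E" and x: "x \<in> \<Omega>"
  have "\<exists>!\<gamma>. \<gamma> \<in> \<Gamma> \<and> x \<in> \<gamma>" using Ecov[OF G x] Edisj[OF G] by blast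
  then show ?thesis unfolding block_of_def by (rule theI')
qed

lemma blk_eq: "\<Gamma> \<in> E \<Longrightarrow> \<gamma> \<in> \<Gamma> \<Longrightarrow> x \<in> \<gamma> \<Longrightarrow> block_of \<Gamma> x = \<gamma>"
  unfolding block_of_def
proof (rule the_equality)
  assume a: "\<Gamma> \<in> E" "\<gamma> \<in> \<Gamma>" "x \<in> \<gamma>"
  show "\<gamma> \<in> \<Gamma> \<and> x \<in> \<gamma>" using a by simp
  fix y assume "y \<in> \<Gamma> \<and> x \<in> y"
  then show "y = \<gamma>" using Edisj[OF a(1), of y \<gamma> x] a by blast
qed

lemma blk_img: "g \<in> G \<Longrightarrow> \<Gamma> \<in> E \<Longrightarrow> x \<in> \<Omega> \<Longrightarrow> g ` block_of \<Gamma> x = block_of (part_img g \<Gamma>) (g x)"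
proof -
  assume g: "g \<in> G" and G: "\<Gamma> \<in> E" and x: "x \<in> \<Omega>"
  have "g ` block_of \<Gamma> x \<in> part_img g \<Gamma>" using blk[OF G x] by (simp add: part_img_def)
  moreover have "g x \<in> g ` block_of \<Gamma> x" using blk[OF G x] by simp
  ultimately show ?thesis using blk_eq[OF pimg_E[OF g G]] by simp
qed

lemma pimult: "g \<in> G \<Longrightarrow> h \<in> G \<Longrightarrow> \<Gamma> \<in> E \<Longrightarrow> part_img (g \<otimes>\<^bsub>BG\<^esub> h) \<Gamma> = part_img g (part_img h \<Gamma>)"
  using part_img_mult GBij Esub' by blast

lemma pione: "\<Gamma> \<in> E \<Longrightarrow> part_img \<one>\<^bsub>BG\<^esub> \<Gamma> = \<Gamma>"
  using part_img_one Esub' by blast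

lemma piinv1: "g \<in> G \<Longrightarrow> \<Gamma> \<in> E \<Longrightarrow> part_img (inv\<^bsub>BG\<^esub> g) (part_img g \<Gamma>) = \<Gamma>"
proof -
  assume g: "g \<in> G" and G: "\<Gamma> \<in> E"
  have "part_img (inv\<^bsub>BG\<^esub> g) (part_img g \<Gamma>) = part_img (inv\<^bsub>BG\<^esub> g \<otimes>\<^bsub>BG\<^esub> g) \<Gamma>"
    using pimult[OF Ginv[OF g] g G] by simp
  also have "inv\<^bsub>BG\<^esub> g \<otimes>\<^bsub>BG\<^esub> g = \<one>\<^bsub>BG\<^esub>"
    using group.l_inv[OF grpB] GBij[OF g] Bij_carrier by blast
  finally show ?thesis using pione[OF G] by simp
qed

lemma piinv2: "g \<in> G \<Longrightarrow> \<Gamma> \<in> E \<Longrightarrow> part_img g (part_img (inv\<^bsub>BG\<^esub> g) \<Gamma>) = \<Gamma>"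
proof -
  assume g: "g \<in> G" and G: "\<Gamma> \<in> E"
  have "part_img g (part_img (inv\<^bsub>BG\<^esub> g) \<Gamma>) = part_img (g \<otimes>\<^bsub>BG\<^esub> inv\<^bsub>BG\<^esub> g) \<Gamma>"
    using pimult[OF g Ginv[OF g] G] by simp
  also have "g \<otimes>\<^bsub>BG\<^esub> inv\<^bsub>BG\<^esub> g = \<one>\<^bsub>BG\<^esub>"
    using group.r_inv[OF grpB] GBij[OF g] Bij_carrier by blast
  finally show ?thesis using pione[OF G] by simp
qed

end


context ctx
begin

definition cell :: "'a set set set \<Rightarrow> 'a \<Rightarrow> 'a set" where
  "cell Ob \<alpha> = (\<Inter>\<Gamma>\<in>Ob. block_of \<Gamma> \<alpha>)"

lemma Mfix_all: "\<forall>m\<in>M. \<forall>\<Gamma>\<in>E. part_img m \<Gamma> = \<Gamma>"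
proof (rule ccontr)
  assume "\<not> (\<forall>m\<in>M. \<forall>\<Gamma>\<in>E. part_img m \<Gamma> = \<Gamma>)"
  then obtain m0 \<Gamma>0 where m0: "m0 \<in> M" and G0: "\<Gamma>0 \<in> E" and mv: "part_img m0 \<Gamma>0 \<noteq> \<Gamma>0" by blast
  define Ob where "Ob = (\<lambda>g. part_img g \<Gamma>0) ` G"
  have ObE: "Ob \<subseteq> E" unfolding Ob_def using pimg_E[OF _ G0] by blast
  have G0Ob: "\<Gamma>0 \<in> Ob" unfolding Ob_def using Gone pione[OF G0] by (metis image_eqI)
  have Obfin: "finite Ob" using ObE Efin finite_subset by blast
  have Obcl: "part_img g \<Gamma> \<in> Ob" if g: "g \<in> G" and G: "\<Gamma> \<in> Ob" for g \<Gamma>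
  proof -
    obtain h where h: "h \<in> G" and Gh: "\<Gamma> = part_img h \<Gamma>0" using G unfolding Ob_def by blast
    have "part_img g \<Gamma> = part_img (g \<otimes>\<^bsub>BG\<^esub> h) \<Gamma>0" using pimult[OF g h G0] Gh by simp
    then show ?thesis unfolding Ob_def using Gmult[OF g h] by blast
  qed
  have ObE': "\<Gamma> \<in> Ob \<Longrightarrow> \<Gamma> \<in> E" for \<Gamma> using ObE by blast
  define N where "N = {m\<in>M. \<forall>\<Gamma>\<in>Ob. part_img m \<Gamma> = \<Gamma>}"
  have Nnormal: "N \<lhd> BG\<lparr>carrier := G\<rparr>"
  proof (rule normal_crit)
    show "N \<subseteq> G" unfolding N_def using MG by blast
    show "\<one>\<^bsub>BG\<^esub> \<in> N" unfolding N_def using Mone pione ObE' by blast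
    show "x \<otimes>\<^bsub>BG\<^esub> y \<in> N" if xy: "x \<in> N" "y \<in> N" for x y
    proof -
      have xM: "x \<in> M" and xf: "\<forall>\<Gamma>\<in>Ob. part_img x \<Gamma> = \<Gamma>" using xy(1) unfolding N_def by auto
      have yM: "y \<in> M" and yf: "\<forall>\<Gamma>\<in>Ob. part_img y \<Gamma> = \<Gamma>" using xy(2) unfolding N_def by auto
      have xG: "x \<in> G" and yG: "y \<in> G" using xM yM MG by auto
      have "part_img (x \<otimes>\<^bsub>BG\<^esub> y) \<Gamma> = \<Gamma>" if G: "\<Gamma> \<in> Ob" for \<Gamma>
        using pimult[OF xG yG ObE'[OF G]] xf yf G by simp
      then show ?thesis unfolding N_def using Mmult[OF xM yM] by blast
    qed
    show "inv\<^bsub>BG\<^esub> x \<in> N" if x: "x \<in> N" for x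
    proof -
      have xM: "x \<in> M" and xf: "\<forall>\<Gamma>\<in>Ob. part_img x \<Gamma> = \<Gamma>" using x unfolding N_def by auto
      have "part_img (inv\<^bsub>BG\<^esub> x) \<Gamma> = \<Gamma>" if G: "\<Gamma> \<in> Ob" for \<Gamma>
        using piinv1[of x \<Gamma>] xM MG ObE'[OF G] xf G by auto
      then show ?thesis unfolding N_def using Minv[OF xM] by blast
    qed
    show "g \<otimes>\<^bsub>BG\<^esub> x \<otimes>\<^bsub>BG\<^esub> inv\<^bsub>BG\<^esub> g \<in> N" if g: "g \<in> G" and x: "x \<in> N" for g x
    proof -
      have xM: "x \<in> M" and xf: "\<forall>\<Gamma>\<in>Ob. part_img x \<Gamma> = \<Gamma>" using x unfolding N_def by auto
      have xG: "x \<in> G" using xM MG by blast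
      have "part_img (g \<otimes>\<^bsub>BG\<^esub> x \<otimes>\<^bsub>BG\<^esub> inv\<^bsub>BG\<^esub> g) \<Gamma> = \<Gamma>" if G: "\<Gamma> \<in> Ob" for \<Gamma>
      proof -
        have G': "part_img (inv\<^bsub>BG\<^esub> g) \<Gamma> \<in> Ob" using Obcl[OF Ginv[OF g] G] .
        have "part_img (g \<otimes>\<^bsub>BG\<^esub> x \<otimes>\<^bsub>BG\<^esub> inv\<^bsub>BG\<^esub> g) \<Gamma>
            = part_img (g \<otimes>\<^bsub>BG\<^esub> x) (part_img (inv\<^bsub>BG\<^esub> g) \<Gamma>)"
          using pimult[OF Gmult[OF g xG] Ginv[OF g] ObE'[OF G]] .
        also have "\<dots> = part_img g (part_img x (part_img (inv\<^bsub>BG\<^esub> g) \<Gamma>))"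
          using pimult[OF g xG ObE'[OF G']] .
        also have "\<dots> = part_img g (part_img (inv\<^bsub>BG\<^esub> g) \<Gamma>)" using xf G' by simp
        also have "\<dots> = \<Gamma>" using piinv2[OF g ObE'[OF G]] .
        finally show ?thesis .
      qed
      then show ?thesis unfolding N_def using Mconj[OF g xM] by blast
    qed
  qed
  have "N \<subseteq> M" unfolding N_def by blast
  then have "N = {\<one>\<^bsub>BG\<^esub>} \<or> N = M" using Mmin Nnormal by blast
  moreover have "m0 \<notin> N" unfolding N_def using G0Ob mv by blast
  ultimately have Ntriv: "N = {\<one>\<^bsub>BG\<^esub>}" using m0 by blast
  define HM where "HM = BG\<lparr>carrier := M\<rparr>"
  have MsubB: "subgroup M BG"
  proof
    show "M \<subseteq> carrier BG" using MBij Bij_carrier by blast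
    show "\<And>x y. x \<in> M \<Longrightarrow> y \<in> M \<Longrightarrow> x \<otimes>\<^bsub>BG\<^esub> y \<in> M" using Mmult by blast
    show "\<one>\<^bsub>BG\<^esub> \<in> M" using Mone .
    show "\<And>x. x \<in> M \<Longrightarrow> inv\<^bsub>BG\<^esub> x \<in> M" using Minv by blast
  qed
  have HMg: "group HM" unfolding HM_def by (rule subgroup.subgroup_is_group[OF MsubB grpB])
  have HMc: "carrier HM = M" unfolding HM_def by simp
  have HMm: "x \<otimes>\<^bsub>HM\<^esub> y = x \<otimes>\<^bsub>BG\<^esub> y" for x y unfolding HM_def by simp
  have HMo: "\<one>\<^bsub>HM\<^esub> = \<one>\<^bsub>BG\<^esub>" unfolding HM_def by simp
  have HMord: "order HM = card M" unfolding order_def HMc ..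
  define \<rho> where "\<rho> = (\<lambda>m. restrict (part_img m) Ob)"
  have rhohom: "group_hom HM (BijGroup Ob) \<rho>"
    unfolding \<rho>_def
  proof (rule act_hom[OF HMg])
    show "\<And>m x. m \<in> carrier HM \<Longrightarrow> x \<in> Ob \<Longrightarrow> part_img m x \<in> Ob"
      using Obcl MG HMc by blast
    show "part_img (m \<otimes>\<^bsub>HM\<^esub> n) x = part_img m (part_img n x)"
      if "m \<in> carrier HM" "n \<in> carrier HM" "x \<in> Ob" for m n x
    proof -
      have "m \<in> G" "n \<in> G" using that HMc MG by auto
      then show ?thesis unfolding HMm using pimult[OF _ _ ObE'[OF that(3)]] by blast
    qed
    show "part_img \<one>\<^bsub>HM\<^esub> x = x" if "x \<in> Ob" for x
      unfolding HMo using pione[OF ObE'[OF that]] .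
  qed
  have rhoinj: "inj_on \<rho> M"
  proof
    fix m n assume m: "m \<in> M" and n: "n \<in> M" and eq: "\<rho> m = \<rho> n"
    have mG: "m \<in> G" and nG: "n \<in> G" using m n MG by auto
    have "part_img (inv\<^bsub>BG\<^esub> n \<otimes>\<^bsub>BG\<^esub> m) \<Gamma> = \<Gamma>" if G: "\<Gamma> \<in> Ob" for \<Gamma>
    proof -
      have "part_img m \<Gamma> = part_img n \<Gamma>" using eq G unfolding \<rho>_def by (metis restrict_apply')
      then have "part_img (inv\<^bsub>BG\<^esub> n \<otimes>\<^bsub>BG\<^esub> m) \<Gamma> = part_img (inv\<^bsub>BG\<^esub> n) (part_img n \<Gamma>)"
        using pimult[OF Ginv[OF nG] mG ObE'[OF G]] by simp
      also have "\<dots> = \<Gamma>" using piinv1[OF nG ObE'[OF G]] .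
      finally show ?thesis .
    qed
    then have "inv\<^bsub>BG\<^esub> n \<otimes>\<^bsub>BG\<^esub> m \<in> N" unfolding N_def using Mmult[OF Minv[OF n] m] by blast
    then have e1: "inv\<^bsub>BG\<^esub> n \<otimes>\<^bsub>BG\<^esub> m = \<one>\<^bsub>BG\<^esub>" using Ntriv by blast
    have mc: "m \<in> carrier BG" and nc: "n \<in> carrier BG" using MBij m n Bij_carrier by auto
    have "inv\<^bsub>BG\<^esub> m = inv\<^bsub>BG\<^esub> n"
      using group.inv_equality[OF grpB e1 mc] group.inv_closed[OF grpB nc] group.inv_inv[OF grpB nc] by simp
    then have "inv\<^bsub>BG\<^esub> (inv\<^bsub>BG\<^esub> m) = inv\<^bsub>BG\<^esub> (inv\<^bsub>BG\<^esub> n)" by simp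
    then show "m = n" using group.inv_inv[OF grpB mc] group.inv_inv[OF grpB nc] by simp
  qed
  have cardM1: "card M dvd fact (card Ob)"
  proof -
    have sub: "subgroup (\<rho> ` M) (BijGroup Ob)"
      using group_hom.img_is_subgroup[OF rhohom] HMc by simp
    have "card (rcosets\<^bsub>BijGroup Ob\<^esub> (\<rho> ` M)) * card (\<rho> ` M) = order (BijGroup Ob)"
      using group.lagrange[OF group_BijGroup sub] .
    then have "card (\<rho> ` M) dvd card (Bij Ob)" unfolding order_def Bij_carrier
      by (metis dvd_triv_right)
    moreover have "card (\<rho> ` M) = card M" using card_image[OF rhoinj] .
    ultimately show ?thesis using card_Bij[OF Obfin] by simp
  qed
  have cellsub: "cell Ob \<alpha> \<subseteq> \<Omega>" if "\<alpha> \<in> \<Omega>" for \<alpha>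
    unfolding cell_def using blk[OF ObE'[OF G0Ob] that] Esub[OF ObE'[OF G0Ob]] G0Ob by blast
  have cellin: "\<alpha> \<in> cell Ob \<alpha>" if "\<alpha> \<in> \<Omega>" for \<alpha>
    unfolding cell_def using blk[OF ObE' that] by blast
  have Obperm: "part_img g ` Ob = Ob" if g: "g \<in> G" for g
  proof
    show "part_img g ` Ob \<subseteq> Ob" using Obcl[OF g] by blast
    show "Ob \<subseteq> part_img g ` Ob"
    proof
      fix \<Gamma> assume G: "\<Gamma> \<in> Ob"
      have "\<Gamma> = part_img g (part_img (inv\<^bsub>BG\<^esub> g) \<Gamma>)" using piinv2[OF g ObE'[OF G]] by simp
      then show "\<Gamma> \<in> part_img g ` Ob" using Obcl[OF Ginv[OF g] G] by blast
    qed
  qed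
  have cellimg: "g ` cell Ob \<alpha> = cell Ob (g \<alpha>)" if g: "g \<in> G" and a: "\<alpha> \<in> \<Omega>" for g \<alpha>
  proof -
    have "g ` cell Ob \<alpha> = (\<Inter>\<Gamma>\<in>Ob. g ` block_of \<Gamma> \<alpha>)"
      unfolding cell_def
    proof (rule image_INT[OF Bij_inj[OF GBij[OF g]] _ G0Ob])
      show "\<forall>\<Gamma>\<in>Ob. block_of \<Gamma> \<alpha> \<subseteq> \<Omega>"
      proof
        fix \<Gamma> assume G: "\<Gamma> \<in> Ob"
        show "block_of \<Gamma> \<alpha> \<subseteq> \<Omega>" using Esub[OF ObE'[OF G]] blk[OF ObE'[OF G] a] by blast
      qed
    qed
    also have "\<dots> = (\<Inter>\<Gamma>\<in>Ob. block_of (part_img g \<Gamma>) (g \<alpha>))"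
      using blk_img[OF g ObE' a] by simp
    also have "\<dots> = (\<Inter>\<Gamma>\<in>part_img g ` Ob. block_of \<Gamma> (g \<alpha>))" by simp
    also have "\<dots> = cell Ob (g \<alpha>)" unfolding cell_def Obperm[OF g] ..
    finally show ?thesis .
  qed
  define P where "P = cell Ob ` \<Omega>"
  have Psub: "S \<subseteq> \<Omega>" if "S \<in> P" for S using that cellsub unfolding P_def by blast
  have actP: "group_hom HM (BijGroup P) (\<lambda>m. restrict (\<lambda>S. m ` S) P)"
  proof (rule act_hom[OF HMg])
    show "m ` x \<in> P" if mx: "m \<in> carrier HM" "x \<in> P" for m x
    proof -
      have m: "m \<in> M" using mx HMc by simp
      obtain \<alpha> where a: "\<alpha> \<in> \<Omega>" and x: "x = cell Ob \<alpha>" using mx(2) unfolding P_def by blast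
      have "m ` x = cell Ob (m \<alpha>)" using cellimg[of m \<alpha>] m MG a x by blast
      moreover have "m \<alpha> \<in> \<Omega>" using Bij_mem[OF MBij[OF m] a] .
      ultimately show ?thesis unfolding P_def by blast
    qed
    show "(m \<otimes>\<^bsub>HM\<^esub> n) ` x = m ` n ` x"
      if "m \<in> carrier HM" "n \<in> carrier HM" "x \<in> P" for m n x
    proof -
      have "m \<in> Bij \<Omega>" "n \<in> Bij \<Omega>" using that HMc MBij by auto
      then show ?thesis unfolding HMm using Bij_mult_img Psub[OF that(3)] by blast
    qed
    show "\<And>x. x \<in> P \<Longrightarrow> \<one>\<^bsub>HM\<^esub> ` x = x"
    proof -
      fix x assume "x \<in> P"
      then have "x \<subseteq> \<Omega>" using Psub by blast
      then show "\<one>\<^bsub>HM\<^esub> ` x = x" unfolding HMo Bij_one by auto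
    qed
  qed
  interpret ga: group_action HM P "\<lambda>m. restrict (\<lambda>S. m ` S) P"
    by (rule group_action.intro[OF actP])
  have c\<omega>P: "cell Ob \<omega> \<in> P" unfolding P_def using om by blast
  have orbP: "orbit HM (\<lambda>m. restrict (\<lambda>S. m ` S) P) (cell Ob \<omega>) = P"
  proof
    show "orbit HM (\<lambda>m. restrict (\<lambda>S. m ` S) P) (cell Ob \<omega>) \<subseteq> P"
    proof
      fix S assume "S \<in> orbit HM (\<lambda>m. restrict (\<lambda>S. m ` S) P) (cell Ob \<omega>)"
      then obtain m where m: "m \<in> M" and S: "S = m ` cell Ob \<omega>"
        unfolding orbit_def HMc using c\<omega>P by auto
      then show "S \<in> P" unfolding P_def using cellimg[OF _ om] MG Bij_mem[OF MBij[OF m] om] by blast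
    qed
    show "P \<subseteq> orbit HM (\<lambda>m. restrict (\<lambda>S. m ` S) P) (cell Ob \<omega>)"
    proof
      fix S assume "S \<in> P"
      then obtain \<alpha> where a: "\<alpha> \<in> \<Omega>" and S: "S = cell Ob \<alpha>" unfolding P_def by blast
      obtain m where m: "m \<in> M" and ma: "m \<omega> = \<alpha>" using Mtrans[OF om a] by blast
      have "S = restrict (\<lambda>S. m ` S) P (cell Ob \<omega>)" using cellimg[of m \<omega>] m MG om ma S c\<omega>P by auto
      then show "S \<in> orbit HM (\<lambda>m. restrict (\<lambda>S. m ` S) P) (cell Ob \<omega>)"
        unfolding orbit_def HMc using m by blast
    qed
  qed
  have cardP1: "card P dvd card M"
  proof -
    have "card P * card (stabilizer HM (\<lambda>m. restrict (\<lambda>S. m ` S) P) (cell Ob \<omega>)) = card M"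
      using ga.orbit_stabilizer_theorem[OF c\<omega>P] orbP HMord by simp
    then show ?thesis by (rule dvdI[OF sym])
  qed
  have PiEsurj: "\<exists>\<alpha>\<in>\<Omega>. \<forall>\<Gamma>\<in>Ob. f \<Gamma> = block_of \<Gamma> \<alpha>" if f: "f \<in> (\<Pi>\<^sub>E \<Gamma>\<in>Ob. \<Gamma>)" for f
  proof -
    define f' where "f' = (\<lambda>\<Gamma>. if \<Gamma> \<in> Ob then f \<Gamma> else (SOME \<gamma>. \<gamma> \<in> \<Gamma>))"
    have f'E: "\<forall>\<Gamma>\<in>E. f' \<Gamma> \<in> \<Gamma>"
    proof
      fix \<Gamma> assume G: "\<Gamma> \<in> E"
      have "\<exists>\<gamma>. \<gamma> \<in> \<Gamma>" using Ecov[OF G om] by blast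
      then show "f' \<Gamma> \<in> \<Gamma>" unfolding f'_def using f by (auto intro: someI_ex)
    qed
    have "card (\<Inter>\<Gamma>\<in>E. f' \<Gamma>) = 1" using Ecart[OF f'E] .
    then obtain x where "(\<Inter>\<Gamma>\<in>E. f' \<Gamma>) = {x}" by (rule card_1_singletonE)
    then obtain \<alpha> where a: "\<alpha> \<in> (\<Inter>\<Gamma>\<in>E. f' \<Gamma>)" by blast
    have "\<alpha> \<in> f' \<Gamma>0" using a G0 by blast
    then have aO: "\<alpha> \<in> \<Omega>" using f'E G0 Esub[OF G0] by blast
    have "\<forall>\<Gamma>\<in>Ob. f \<Gamma> = block_of \<Gamma> \<alpha>"
    proof
      fix \<Gamma> assume G: "\<Gamma> \<in> Ob"
      have "\<alpha> \<in> f' \<Gamma>" using a ObE'[OF G] by blast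
      then have "\<alpha> \<in> f \<Gamma>" using G unfolding f'_def by simp
      moreover have "f \<Gamma> \<in> \<Gamma>" using f G by auto
      ultimately show "f \<Gamma> = block_of \<Gamma> \<alpha>" using blk_eq[OF ObE'[OF G]] by simp
    qed
    then show ?thesis using aO by blast
  qed
  have bijP: "bij_betw (\<lambda>f. \<Inter>\<Gamma>\<in>Ob. f \<Gamma>) (\<Pi>\<^sub>E \<Gamma>\<in>Ob. \<Gamma>) P"
  proof (rule bij_betw_imageI)
    show "inj_on (\<lambda>f. \<Inter>\<Gamma>\<in>Ob. f \<Gamma>) (\<Pi>\<^sub>E \<Gamma>\<in>Ob. \<Gamma>)"
    proof
      fix f g assume f: "f \<in> (\<Pi>\<^sub>E \<Gamma>\<in>Ob. \<Gamma>)" and g: "g \<in> (\<Pi>\<^sub>E \<Gamma>\<in>Ob. \<Gamma>)"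
        and eq: "(\<Inter>\<Gamma>\<in>Ob. f \<Gamma>) = (\<Inter>\<Gamma>\<in>Ob. g \<Gamma>)"
      obtain \<alpha> where a: "\<alpha> \<in> \<Omega>" and fa: "\<forall>\<Gamma>\<in>Ob. f \<Gamma> = block_of \<Gamma> \<alpha>" using PiEsurj[OF f] by blast
      have "\<alpha> \<in> (\<Inter>\<Gamma>\<in>Ob. f \<Gamma>)" using fa cellin[OF a] unfolding cell_def by simp
      then have ag: "\<alpha> \<in> g \<Gamma>" if "\<Gamma> \<in> Ob" for \<Gamma> using eq that by blast
      show "f = g"
      proof (rule PiE_ext[OF f g])
        fix \<Gamma> assume G: "\<Gamma> \<in> Ob"
        have "g \<Gamma> \<in> \<Gamma>" using g G by auto
        then have "g \<Gamma> = block_of \<Gamma> \<alpha>" using blk_eq[OF ObE'[OF G] _ ag[OF G]] by simp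
        then show "f \<Gamma> = g \<Gamma>" using fa G by simp
      qed
    qed
    show "(\<lambda>f. \<Inter>\<Gamma>\<in>Ob. f \<Gamma>) ` (\<Pi>\<^sub>E \<Gamma>\<in>Ob. \<Gamma>) = P"
    proof
      show "(\<lambda>f. \<Inter>\<Gamma>\<in>Ob. f \<Gamma>) ` (\<Pi>\<^sub>E \<Gamma>\<in>Ob. \<Gamma>) \<subseteq> P"
      proof
        fix S assume "S \<in> (\<lambda>f. \<Inter>\<Gamma>\<in>Ob. f \<Gamma>) ` (\<Pi>\<^sub>E \<Gamma>\<in>Ob. \<Gamma>)"
        then obtain f where f: "f \<in> (\<Pi>\<^sub>E \<Gamma>\<in>Ob. \<Gamma>)" and S: "S = (\<Inter>\<Gamma>\<in>Ob. f \<Gamma>)" by blast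
        obtain \<alpha> where a: "\<alpha> \<in> \<Omega>" and fa: "\<forall>\<Gamma>\<in>Ob. f \<Gamma> = block_of \<Gamma> \<alpha>" using PiEsurj[OF f] by blast
        have "S = cell Ob \<alpha>" unfolding S cell_def using fa by simp
        then show "S \<in> P" unfolding P_def using a by blast
      qed
      show "P \<subseteq> (\<lambda>f. \<Inter>\<Gamma>\<in>Ob. f \<Gamma>) ` (\<Pi>\<^sub>E \<Gamma>\<in>Ob. \<Gamma>)"
      proof
        fix S assume "S \<in> P"
        then obtain \<alpha> where a: "\<alpha> \<in> \<Omega>" and S: "S = cell Ob \<alpha>" unfolding P_def by blast
        have r: "restrict (\<lambda>\<Gamma>. block_of \<Gamma> \<alpha>) Ob \<in> (\<Pi>\<^sub>E \<Gamma>\<in>Ob. \<Gamma>)" using blk[OF ObE' a] by auto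
        have "S = (\<Inter>\<Gamma>\<in>Ob. restrict (\<lambda>\<Gamma>. block_of \<Gamma> \<alpha>) Ob \<Gamma>)" unfolding S cell_def by simp
        then show "S \<in> (\<lambda>f. \<Inter>\<Gamma>\<in>Ob. f \<Gamma>) ` (\<Pi>\<^sub>E \<Gamma>\<in>Ob. \<Gamma>)" using r by blast
      qed
    qed
  qed
  define n where "n = card \<Gamma>0"
  have cardOb: "card \<Gamma> = n" if G: "\<Gamma> \<in> Ob" for \<Gamma>
  proof -
    obtain g where g: "g \<in> G" and Gg: "\<Gamma> = part_img g \<Gamma>0" using G unfolding Ob_def by blast
    have "inj_on (\<lambda>\<gamma>. g ` \<gamma>) \<Gamma>0"
    proof
      fix a b assume "a \<in> \<Gamma>0" "b \<in> \<Gamma>0" "g ` a = g ` b"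
      then show "a = b" using inj_on_image_eq_iff[OF Bij_inj[OF GBij[OF g]]] Esub[OF G0] by blast
    qed
    then show ?thesis unfolding Gg part_img_def n_def by (rule card_image)
  qed
  have cardP: "card P = n ^ card Ob"
  proof -
    have "card P = card (\<Pi>\<^sub>E \<Gamma>\<in>Ob. \<Gamma>)" using bij_betw_same_card[OF bijP] by simp
    also have "\<dots> = (\<Prod>\<Gamma>\<in>Ob. card \<Gamma>)" using card_PiE[OF Obfin] .
    also have "\<dots> = (\<Prod>\<Gamma>\<in>Ob. n)" using cardOb by (rule prod.cong[OF refl])
    also have "\<dots> = n ^ card Ob" by simp
    finally show ?thesis .
  qed
  have n1: "n \<noteq> 1"
  proof
    assume "n = 1"
    then obtain \<gamma> where g: "\<Gamma>0 = {\<gamma>}" unfolding n_def by (rule card_1_singletonE)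
    then have "\<gamma> = \<Omega>" using Eun[OF G0] by simp
    then have "part_img m0 \<Gamma>0 = \<Gamma>0" unfolding part_img_def g using Bij_img[OF MBij[OF m0]] by simp
    then show False using mv by simp
  qed
  obtain p where p: "Factorial_Ring.prime p" and pn: "p dvd n" using prime_factor_nat[OF n1] by blast
  have "card Ob > 0" using Obfin G0Ob by (auto simp: card_gt_0_iff)
  then have k1: "card Ob \<ge> 1" by simp
  have "p ^ card Ob dvd n ^ card Ob" using pn by (rule dvd_power_same)
  also have "\<dots> dvd card M" using cardP cardP1 by simp
  also have "\<dots> dvd fact (card Ob)" by (rule cardM1)
  finally show False using not_pow_dvd_fact[OF p k1] by simp
qed

end


context ctx
begin

lemma Mfix: "m \<in> M \<Longrightarrow> \<Gamma> \<in> E \<Longrightarrow> part_img m \<Gamma> = \<Gamma>"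
  using Mfix_all by blast

lemma Enoempty: "\<Gamma> \<in> E \<Longrightarrow> {} \<notin> \<Gamma>"
  using Epart by (simp add: partition_on_def)

lemma blk_orbit: "\<Gamma> \<in> E \<Longrightarrow> block_of \<Gamma> \<omega> = (\<lambda>m. m \<omega>) ` set_stab M (block_of \<Gamma> \<omega>)"
proof -
  assume G: "\<Gamma> \<in> E"
  define \<gamma> where "\<gamma> = block_of \<Gamma> \<omega>"
  have g\<Gamma>: "\<gamma> \<in> \<Gamma>" and \<omega>g: "\<omega> \<in> \<gamma>" using blk[OF G om] unfolding \<gamma>_def by auto
  have "\<gamma> = (\<lambda>m. m \<omega>) ` set_stab M \<gamma>"
  proof
    show "(\<lambda>m. m \<omega>) ` set_stab M \<gamma> \<subseteq> \<gamma>"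
      using \<omega>g unfolding set_stab_def by blast
    show "\<gamma> \<subseteq> (\<lambda>m. m \<omega>) ` set_stab M \<gamma>"
    proof
      fix x assume x: "x \<in> \<gamma>"
      have xO: "x \<in> \<Omega>" using Esub[OF G g\<Gamma>] x by blast
      obtain m where m: "m \<in> M" and mx: "m \<omega> = x" using Mtrans[OF om xO] by blast
      have "m ` \<gamma> \<in> part_img m \<Gamma>" using g\<Gamma> unfolding part_img_def by blast
      then have "m ` \<gamma> \<in> \<Gamma>" using Mfix[OF m G] by simp
      moreover have "x \<in> m ` \<gamma>" using \<omega>g mx by blast
      ultimately have "m ` \<gamma> = \<gamma>" using Edisj[OF G _ g\<Gamma> _ x] by blast
      then have "m \<in> set_stab M \<gamma>" using m unfolding set_stab_def by blast
      then show "x \<in> (\<lambda>m. m \<omega>) ` set_stab M \<gamma>" using mx by blast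
    qed
  qed
  then show ?thesis unfolding \<gamma>_def .
qed

lemma part_from_blk: "\<Gamma> \<in> E \<Longrightarrow> \<Gamma> = (\<lambda>m. m ` block_of \<Gamma> \<omega>) ` M"
proof -
  assume G: "\<Gamma> \<in> E"
  define \<gamma> where "\<gamma> = block_of \<Gamma> \<omega>"
  have g\<Gamma>: "\<gamma> \<in> \<Gamma>" and \<omega>g: "\<omega> \<in> \<gamma>" using blk[OF G om] unfolding \<gamma>_def by auto
  have "\<Gamma> = (\<lambda>m. m ` \<gamma>) ` M"
  proof
    show "(\<lambda>m. m ` \<gamma>) ` M \<subseteq> \<Gamma>"
    proof
      fix \<delta> assume "\<delta> \<in> (\<lambda>m. m ` \<gamma>) ` M"
      then obtain m where m: "m \<in> M" and d: "\<delta> = m ` \<gamma>" by blast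
      have "m ` \<gamma> \<in> part_img m \<Gamma>" using g\<Gamma> unfolding part_img_def by blast
      then show "\<delta> \<in> \<Gamma>" using Mfix[OF m G] d by simp
    qed
    show "\<Gamma> \<subseteq> (\<lambda>m. m ` \<gamma>) ` M"
    proof
      fix \<delta> assume d: "\<delta> \<in> \<Gamma>"
      have "\<delta> \<noteq> {}" using Enoempty[OF G] d by blast
      then obtain x where x: "x \<in> \<delta>" by blast
      have xO: "x \<in> \<Omega>" using Esub[OF G d] x by blast
      obtain m where m: "m \<in> M" and mx: "m \<omega> = x" using Mtrans[OF om xO] by blast
      have "m ` \<gamma> \<in> part_img m \<Gamma>" using g\<Gamma> unfolding part_img_def by blast
      then have "m ` \<gamma> \<in> \<Gamma>" using Mfix[OF m G] by simp
      moreover have "x \<in> m ` \<gamma>" using \<omega>g mx by blast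
      ultimately have "m ` \<gamma> = \<delta>" using Edisj[OF G _ d _ x] by blast
      then show "\<delta> \<in> (\<lambda>m. m ` \<gamma>) ` M" using m by blast
    qed
  qed
  then show ?thesis unfolding \<gamma>_def .
qed

lemma phi_inj: "inj_on (\<lambda>\<Gamma>. set_stab M (block_of \<Gamma> \<omega>)) E"
proof
  fix \<Gamma>1 \<Gamma>2 assume G1: "\<Gamma>1 \<in> E" and G2: "\<Gamma>2 \<in> E"
    and eq: "set_stab M (block_of \<Gamma>1 \<omega>) = set_stab M (block_of \<Gamma>2 \<omega>)"
  have "block_of \<Gamma>1 \<omega> = (\<lambda>m. m \<omega>) ` set_stab M (block_of \<Gamma>1 \<omega>)" by (rule blk_orbit[OF G1])
  also have "\<dots> = (\<lambda>m. m \<omega>) ` set_stab M (block_of \<Gamma>2 \<omega>)" by (simp only: eq)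
  also have "\<dots> = block_of \<Gamma>2 \<omega>" by (rule blk_orbit[OF G2, symmetric])
  finally have eqb: "block_of \<Gamma>1 \<omega> = block_of \<Gamma>2 \<omega>" .
  have "\<Gamma>1 = (\<lambda>m. m ` block_of \<Gamma>1 \<omega>) ` M" by (rule part_from_blk[OF G1])
  also have "\<dots> = (\<lambda>m. m ` block_of \<Gamma>2 \<omega>) ` M" by (simp only: eqb)
  also have "\<dots> = \<Gamma>2" by (rule part_from_blk[OF G2, symmetric])
  finally show "\<Gamma>1 = \<Gamma>2" .
qed

lemma img3: "g \<in> Bij \<Omega> \<Longrightarrow> k \<in> Bij \<Omega> \<Longrightarrow> h \<in> Bij \<Omega> \<Longrightarrow> A \<subseteq> \<Omega> \<Longrightarrow>
  (g \<otimes>\<^bsub>BG\<^esub> k \<otimes>\<^bsub>BG\<^esub> h) ` A = g ` k ` h ` A"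
proof -
  assume g: "g \<in> Bij \<Omega>" and k: "k \<in> Bij \<Omega>" and h: "h \<in> Bij \<Omega>" and A: "A \<subseteq> \<Omega>"
  have gk: "g \<otimes>\<^bsub>BG\<^esub> k \<in> Bij \<Omega>" using g k by (simp add: Bij_mult compose_Bij)
  have hA: "h ` A \<subseteq> \<Omega>" using Bij_img_sub[OF h A] .
  have "(g \<otimes>\<^bsub>BG\<^esub> k \<otimes>\<^bsub>BG\<^esub> h) ` A = (g \<otimes>\<^bsub>BG\<^esub> k) ` h ` A" using Bij_mult_img[OF gk h A] .
  also have "\<dots> = g ` k ` h ` A" using Bij_mult_img[OF g k hA] .
  finally show ?thesis .
qed

lemma inv_img1: "g \<in> Bij \<Omega> \<Longrightarrow> A \<subseteq> \<Omega> \<Longrightarrow> (inv\<^bsub>BG\<^esub> g) ` g ` A = A"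
proof -
  assume g: "g \<in> Bij \<Omega>" and A: "A \<subseteq> \<Omega>"
  have "(inv\<^bsub>BG\<^esub> g) ` g ` A = (\<lambda>x. (inv\<^bsub>BG\<^esub> g) (g x)) ` A" by (simp add: image_image)
  also have "\<dots> = (\<lambda>x. x) ` A"
  proof (rule image_cong[OF refl])
    fix x assume "x \<in> A"
    then have "x \<in> \<Omega>" using A by blast
    then show "(inv\<^bsub>BG\<^esub> g) (g x) = x" using Bij_inv_left[OF g] by simp
  qed
  finally show ?thesis by simp
qed

lemma inv_img2: "g \<in> Bij \<Omega> \<Longrightarrow> A \<subseteq> \<Omega> \<Longrightarrow> g ` (inv\<^bsub>BG\<^esub> g) ` A = A"
proof -
  assume g: "g \<in> Bij \<Omega>" and A: "A \<subseteq> \<Omega>"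
  have "g ` (inv\<^bsub>BG\<^esub> g) ` A = (\<lambda>x. g ((inv\<^bsub>BG\<^esub> g) x)) ` A" by (simp add: image_image)
  also have "\<dots> = (\<lambda>x. x) ` A"
  proof (rule image_cong[OF refl])
    fix x assume "x \<in> A"
    then have "x \<in> \<Omega>" using A by blast
    then show "g ((inv\<^bsub>BG\<^esub> g) x) = x" using Bij_inv_right[OF g] by simp
  qed
  finally show ?thesis by simp
qed

lemma conj_stab:
  assumes g: "g \<in> G" and A: "\<gamma> \<subseteq> \<Omega>"
  shows "set_stab M (g ` \<gamma>) = conj_set \<Omega> g (set_stab M \<gamma>)"
proof -
  interpret Bg: group BG by (rule grpB)
  have gB: "g \<in> Bij \<Omega>" using GBij[OF g] .
  have igB: "inv\<^bsub>BG\<^esub> g \<in> Bij \<Omega>" using Bij_inv_mem[OF gB] .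
  have gc: "g \<in> carrier BG" using gB Bij_carrier by blast
  have gA: "g ` \<gamma> \<subseteq> \<Omega>" using Bij_img_sub[OF gB A] .
  show ?thesis
  proof
    show "conj_set \<Omega> g (set_stab M \<gamma>) \<subseteq> set_stab M (g ` \<gamma>)"
    proof
      fix h assume "h \<in> conj_set \<Omega> g (set_stab M \<gamma>)"
      then obtain k where k: "k \<in> M" and kg: "k ` \<gamma> = \<gamma>" and h: "h = g \<otimes>\<^bsub>BG\<^esub> k \<otimes>\<^bsub>BG\<^esub> inv\<^bsub>BG\<^esub> g"
        unfolding conj_set_def set_stab_def by blast
      have "h ` (g ` \<gamma>) = g ` k ` (inv\<^bsub>BG\<^esub> g) ` g ` \<gamma>"
        unfolding h using img3[OF gB MBij[OF k] igB gA] .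
      also have "\<dots> = g ` \<gamma>" using inv_img1[OF gB A] kg by simp
      finally show "h \<in> set_stab M (g ` \<gamma>)" unfolding set_stab_def using Mconj[OF g k] h by blast
    qed
    show "set_stab M (g ` \<gamma>) \<subseteq> conj_set \<Omega> g (set_stab M \<gamma>)"
    proof
      fix h assume "h \<in> set_stab M (g ` \<gamma>)"
      then have h: "h \<in> M" and hg: "h ` g ` \<gamma> = g ` \<gamma>" unfolding set_stab_def by auto
      have hc: "h \<in> carrier BG" using MBij[OF h] Bij_carrier by blast
      define k where "k = inv\<^bsub>BG\<^esub> g \<otimes>\<^bsub>BG\<^esub> h \<otimes>\<^bsub>BG\<^esub> g"
      have "inv\<^bsub>BG\<^esub> g \<otimes>\<^bsub>BG\<^esub> h \<otimes>\<^bsub>BG\<^esub> inv\<^bsub>BG\<^esub> (inv\<^bsub>BG\<^esub> g) \<in> M"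
        using Mconj[OF Ginv[OF g] h] .
      then have kM: "k \<in> M" unfolding k_def using Bg.inv_inv[OF gc] by simp
      have "k ` \<gamma> = (inv\<^bsub>BG\<^esub> g) ` h ` g ` \<gamma>"
        unfolding k_def using img3[OF igB MBij[OF h] gB A] .
      also have "\<dots> = \<gamma>" using hg inv_img1[OF gB A] by simp
      finally have ks: "k \<in> set_stab M \<gamma>" unfolding set_stab_def using kM by blast
      have "g \<otimes>\<^bsub>BG\<^esub> k \<otimes>\<^bsub>BG\<^esub> inv\<^bsub>BG\<^esub> g
          = (g \<otimes>\<^bsub>BG\<^esub> inv\<^bsub>BG\<^esub> g) \<otimes>\<^bsub>BG\<^esub> h \<otimes>\<^bsub>BG\<^esub> (g \<otimes>\<^bsub>BG\<^esub> inv\<^bsub>BG\<^esub> g)"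
        unfolding k_def using gc hc Bg.inv_closed[OF gc] by (simp only: Bg.m_assoc Bg.m_closed)
      also have "\<dots> = h" using gc hc by simp
      finally have eqh: "g \<otimes>\<^bsub>BG\<^esub> k \<otimes>\<^bsub>BG\<^esub> inv\<^bsub>BG\<^esub> g = h" .
      show "h \<in> conj_set \<Omega> g (set_stab M \<gamma>)" unfolding conj_set_def
        by (rule image_eqI[where x=k and f="\<lambda>k. g \<otimes>\<^bsub>BG\<^esub> k \<otimes>\<^bsub>BG\<^esub> inv\<^bsub>BG\<^esub> g", OF eqh[symmetric] ks])
    qed
  qed
qed

lemma phi_equiv:
  assumes g: "g \<in> point_stab G \<omega>" and G: "\<Gamma> \<in> E"
  shows "set_stab M (block_of (part_img g \<Gamma>) \<omega>) = conj_set \<Omega> g (set_stab M (block_of \<Gamma> \<omega>))"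
proof -
  have gG: "g \<in> G" and gw: "g \<omega> = \<omega>" using g unfolding point_stab_def by auto
  have "block_of (part_img g \<Gamma>) \<omega> = g ` block_of \<Gamma> \<omega>" using blk_img[OF gG G om] gw by simp
  moreover have "block_of \<Gamma> \<omega> \<subseteq> \<Omega>" using Esub[OF G] blk[OF G om] by blast
  ultimately show ?thesis using conj_stab[OF gG] by simp
qed

end

theorem lemma2p3:
  fixes \<Omega> :: "'a set" and G M :: "('a \<Rightarrow> 'a) set" and \<omega> :: 'a and E :: "'a set set set"
  assumes "finite \<Omega>"
    and "innately_transitive_plinth \<Omega> G M"
    and "\<omega> \<in> \<Omega>"
    and "E \<in> CD \<Omega> G"
  shows "cd_kernel M E = M
    \<and> (\<forall>g\<in>point_stab G \<omega>. conj_set \<Omega> g ` cart_system M \<omega> E = cart_system M \<omega> E)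
    \<and> (\<exists>\<phi>. bij_betw \<phi> E (cart_system M \<omega> E) \<and>
          (\<forall>g\<in>point_stab G \<omega>. \<forall>\<Gamma>\<in>E. \<phi> (part_img g \<Gamma>) = conj_set \<Omega> g (\<phi> \<Gamma>)))"
proof -
  interpret c: ctx \<Omega> G M \<omega> E using assms by (unfold_locales) auto
  define \<phi> where "\<phi> = (\<lambda>\<Gamma>. set_stab M (block_of \<Gamma> \<omega>))"
  have cs: "cart_system M \<omega> E = \<phi> ` E" unfolding cart_system_def \<phi>_def ..
  have k: "cd_kernel M E = M" unfolding cd_kernel_def using c.Mfix_all by auto
  have eqv: "\<forall>g\<in>point_stab G \<omega>. \<forall>\<Gamma>\<in>E. \<phi> (part_img g \<Gamma>) = conj_set \<Omega> g (\<phi> \<Gamma>)"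
    unfolding \<phi>_def using c.phi_equiv by blast
  have bij: "bij_betw \<phi> E (cart_system M \<omega> E)"
    unfolding cs bij_betw_def using c.phi_inj unfolding \<phi>_def by simp
  have inv: "conj_set \<Omega> g ` cart_system M \<omega> E = cart_system M \<omega> E" if g: "g \<in> point_stab G \<omega>" for g
  proof -
    have gG: "g \<in> G" using g unfolding point_stab_def by auto
    have "conj_set \<Omega> g ` \<phi> ` E = (\<lambda>\<Gamma>. conj_set \<Omega> g (\<phi> \<Gamma>)) ` E" by (simp add: image_image)
    also have "\<dots> = (\<lambda>\<Gamma>. \<phi> (part_img g \<Gamma>)) ` E" using eqv g by (intro image_cong) auto
    also have "\<dots> = \<phi> ` (part_img g ` E)" by (simp add: image_image)
    also have "\<dots> = \<phi> ` E" using c.Einv[OF gG] by simp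
    finally show ?thesis unfolding cs .
  qed
  show ?thesis using k inv bij eqv by blast
qed

end
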